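(* (1) For $\mathcal{T}\in\mathbb{T}_k$, $\mathcal{T}'\in\mathbb{T}_l$, $$R_{\mathcal{T}}.R_{\mathcal{T}'}=\sum_{\substack{\mathcal{T}''\in\mathbb{T}_{k+l}\\ \mathcal{T}''_{\mid[k]}=\mathcal{T},\ \mathrm{Std}(\mathcal{T}''_{\mid[k+l]\setminus[k]})=\mathcal{T}'}}R_{\mathcal{T}''}.$$ (2) For $\mathcal{T}\in\mathbb{T}_k$, $\mathcal{T}'\in\mathbb{T}_l$, $$R_{\mathcal{T}}\downarrow R_{\mathcal{T}'}=\sum_{\substack{\mathcal{T}''\in\mathbb{T}_{k+l}\\ \mathcal{T}''_{\mid[k]}=\mathcal{T},\ \mathrm{Std}(\mathcal{T}''_{\mid[k+l]\setminus[k]})=\mathcal{T}',\\ [k]\leq_{\mathcal{T}''}[k+l]\setminus[k]}}R_{\mathcal{T}''}.$$ (3) For $\mathcal{T}\in\mathbb{T}_n$, $$\Delta(R_{\mathcal{T}})=\sum_{\substack{O\in\mathcal{T}\\ [n]\setminus O<_{\mathcal{T}}O}}R_{\mathrm{Std}(\mathcal{T}_{\mid[n]\setminus O})}\otimes R_{\mathrm{Std}(\mathcal{T}_{\mid O})}.$$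
   Context: Let $K$ be a field. For $n\geq0$, $[n]=\{1,\ldots,n\}$, $\mathbb{T}_n$ is the set of topologies on $[n]$, $\mathcal{H}_{\mathbb{T}}$ the $K$-vector space with basis $\bigsqcup_n\mathbb{T}_n$. For a topology $\mathcal{T}$ on finite $X$: $i\leq_{\mathcal{T}}j$ iff every open set containing $i$ contains $j$; $i<_{\mathcal{T}}j$ iff $i\leq_{\mathcal{T}}j$ and not $j\leq_{\mathcal{T}}i$. For $I,J\subseteq X$, $I\leq_{\mathcal{T}}J$ means $i\leq_{\mathcal{T}}j$ for all $i\in I,j\in J$, and $I<_{\mathcal{T}}J$ means $i<_{\mathcal{T}}j$ for all $i\in I,j\in J$ (vacuous if $I$ or $J$ is empty). For $Y\subseteq X$, $\mathcal{T}_{\mid Y}=\{O\cap Y\mid O\in\mathcal{T}\}$; if $X$ is totally ordered of size $m$, $\mathrm{Std}(\mathcal{T})\in\mathbb{T}_m$ is the transport along the increasing bijection $X\to[m]$. For $O\subseteq\mathbb{N}$, $O(+n)=\{k+n\mid k\in O\}$. Bilinear products: for $\mathcal{T}\in\mathbb{T}_n,\mathcal{T}'\in\mathbb{T}_{n'}$, $\mathcal{T}.\mathcal{T}'$ is the topology on $[n+n']$ with open sets $O\sqcup O'(+n)$, and $\mathcal{T}\downarrow\mathcal{T}'$ the topology with open sets $O\sqcup[n'](+n)$ and $O'(+n)$ ($O\in\mathcal{T},O'\in\mathcal{T}'$). Coproduct $\Delta(\mathcal{T})=\sum_{O\in\mathcal{T}}\mathrm{Std}(\mathcal{T}_{\mid[n]\setminus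 O})\otimes\mathrm{Std}(\mathcal{T}_{\mid O})$. $\mathbb{T}_n$ is partially ordered by refinement: $\mathcal{T}\leq\mathcal{T}'$ iff every open set of $\mathcal{T}$ is an open set of $\mathcal{T}'$. The ribbon basis $(R_{\mathcal{T}})$ of $\mathcal{H}_{\mathbb{T}}$ is defined by $\mathcal{T}=\sum_{\mathcal{T}'\in\mathbb{T}_n,\ \mathcal{T}'\leq\mathcal{T}}R_{\mathcal{T}'}$ for all $\mathcal{T}\in\mathbb{T}_n$, $n\geq0$ (equivalently via Möbius inversion). *)

theory Defs
  imports Main "HOL-Library.Function_Algebras"
begin

text \<open>A topology on [n] is represented by its set of open sets.  On a finite set,
closure under binary unions and intersections is closure under arbitrary ones.\<close>
definition tops :: "nat \<Rightarrow> nat set set set" where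
  "tops n = {T. T \<subseteq> Pow {1..n} \<and> {} \<in> T \<and> {1..n} \<in> T \<and>
               (\<forall>A\<in>T. \<forall>B\<in>T. A \<union> B \<in> T \<and> A \<inter> B \<in> T)}"

definition tsize :: "nat set set \<Rightarrow> nat" where
  "tsize T = card (\<Union>T)"

definition tleq :: "nat set set \<Rightarrow> nat \<Rightarrow> nat \<Rightarrow> bool" where
  "tleq T i j \<longleftrightarrow> (\<forall>U\<in>T. i \<in> U \<longrightarrow> j \<in> U)"

definition tless :: "nat set set \<Rightarrow> nat \<Rightarrow> nat \<Rightarrow> bool" where
  "tless T i j \<longleftrightarrow> tleq T i j \<and> \<not> tleq T j i"

definition tleq_set :: "nat set set \<Rightarrow> nat set \<Rightarrow> nat set \<Rightarrow> bool" where
  "tleq_set T I J \<longleftrightarrow> (\<forall>i\<in>I. \<forall>j\<in>J. tleq T i j)"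

definition tless_set :: "nat set set \<Rightarrow> nat set \<Rightarrow> nat set \<Rightarrow> bool" where
  "tless_set T I J \<longleftrightarrow> (\<forall>i\<in>I. \<forall>j\<in>J. tless T i j)"

definition restr :: "nat set set \<Rightarrow> nat set \<Rightarrow> nat set set" where
  "restr T Y = (\<lambda>U. U \<inter> Y) ` T"

text \<open>Standardization: transport along the increasing bijection from the underlying
set X (= union of the open sets) onto [card X], x \<mapsto> #{y \<in> X. y \<le> x}.\<close>
definition Std :: "nat set set \<Rightarrow> nat set set" where
  "Std T = (\<lambda>U. (\<lambda>x. card {y \<in> \<Union>T. y \<le> x}) ` U) ` T"

definition shift :: "nat set \<Rightarrow> nat \<Rightarrow> nat set" where
  "shift U n = (\<lambda>k. k + n) ` U"

definition tdot :: "nat set set \<Rightarrow> nat set set \<Rightarrow> nat set set" where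
  "tdot T T' = {U \<union> shift U' (tsize T) | U U'. U \<in> T \<and> U' \<in> T'}"

definition tdown :: "nat set set \<Rightarrow> nat set set \<Rightarrow> nat set set" where
  "tdown T T' = {U \<union> shift {1..tsize T'} (tsize T) | U. U \<in> T} \<union> {shift U' (tsize T) | U'. U' \<in> T'}"

text \<open>Elements of H_T are (finitely supported) coefficient functions on topologies;
elements of H_T \<otimes> H_T are coefficient functions on pairs of topologies.\<close>
type_synonym 'k vec = "nat set set \<Rightarrow> 'k"
type_synonym 'k vec2 = "nat set set \<times> nat set set \<Rightarrow> 'k"

definition bvec :: "nat set set \<Rightarrow> 'k::field vec" where
  "bvec T = (\<lambda>S. if S = T then 1 else 0)"

definition supp :: "'k::field vec \<Rightarrow> nat set set set" where
  "supp x = {A. x A \<noteq> 0}"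

definition bilin :: "(nat set set \<Rightarrow> nat set set \<Rightarrow> nat set set) \<Rightarrow> 'k::field vec \<Rightarrow> 'k vec \<Rightarrow> 'k vec" where
  "bilin f x y = (\<lambda>S. \<Sum>A\<in>supp x. \<Sum>B\<in>supp y. if f A B = S then x A * y B else 0)"

definition prod_dot :: "'k::field vec \<Rightarrow> 'k vec \<Rightarrow> 'k vec" where
  "prod_dot = bilin tdot"

definition prod_down :: "'k::field vec \<Rightarrow> 'k vec \<Rightarrow> 'k vec" where
  "prod_down = bilin tdown"

definition tensor :: "'k::field vec \<Rightarrow> 'k vec \<Rightarrow> 'k vec2" where
  "tensor u v = (\<lambda>(A, B). u A * v B)"

definition coprod :: "'k::field vec \<Rightarrow> 'k vec2" where
  "coprod x = (\<lambda>(A, B). \<Sum>T\<in>supp x. x T *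
       (\<Sum>U\<in>T. if Std (restr T (\<Union>T - U)) = A \<and> Std (restr T U) = B then 1 else 0))"

text \<open>Defined by T = sum over T' \<le> T (refinement, i.e. T' \<subseteq> T, in the same T_n) of R_T',
i.e. R_T = T - sum over T' < T of R_T'.  Zero on non-topologies.\<close>
function ribbon :: "nat set set \<Rightarrow> 'k::field vec" where
  "ribbon T = (if T \<in> tops (tsize T)
      then bvec T - (\<Sum>T'\<in>{T'\<in>tops (tsize T). T' \<subset> T}. ribbon T')
      else 0)"
  by auto
termination
proof (relation "measure card")
  fix T T' :: "nat set set"
  assume "T \<in> tops (tsize T)" "T' \<in> {T'\<in>tops (tsize T). T' \<subset> T}"
  moreover have "finite T" using \<open>T \<in> tops (tsize T)\<close>
    unfolding tops_def by (auto intro: finite_subset)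
  ultimately show "(T', T) \<in> measure card" by (auto intro: psubset_card_mono)
qed auto

end

theory Submission
  imports Defs
begin


declare ribbon.simps[simp del]

lemma sum_apply: "(sum f A) x = (\<Sum>a\<in>A. f a x)"
  by (induction A rule: infinite_finite_induct) auto

definition istop :: "nat set \<Rightarrow> nat set set \<Rightarrow> bool" where
  "istop X M \<longleftrightarrow> M \<subseteq> Pow X \<and> {} \<in> M \<and> X \<in> M \<and> (\<forall>A\<in>M. \<forall>B\<in>M. A \<union> B \<in> M \<and> A \<inter> B \<in> M)"

lemma tops_istop: "T \<in> tops n \<longleftrightarrow> istop {1..n} T"
  by (simp add: tops_def istop_def)

lemma istop_Union: "istop X M \<Longrightarrow> \<Union>M = X"
  unfolding istop_def by auto

lemma tops_Union: "T \<in> tops n \<Longrightarrow> \<Union>T = {1..n}"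
  using istop_Union tops_istop by blast

lemma tops_tsize: "T \<in> tops n \<Longrightarrow> tsize T = n"
  by (simp add: tsize_def tops_Union)

lemma finite_tops: "finite (tops n)"
proof -
  have "tops n \<subseteq> Pow (Pow {1..n})" unfolding tops_def by auto
  then show ?thesis by (rule finite_subset) auto
qed

lemma tops_finite: "T \<in> tops n \<Longrightarrow> finite T"
proof -
  assume "T \<in> tops n"
  then have "T \<subseteq> Pow {1..n}" unfolding tops_def by auto
  then show "finite T" by (rule finite_subset) auto
qed

lemma ribbon_eq:
  "T \<in> tops (tsize T) \<Longrightarrow> (ribbon T :: 'k::field vec) = bvec T - (\<Sum>T'\<in>{T'\<in>tops (tsize T). T' \<subset> T}. ribbon T')"
  by (subst ribbon.simps) (simp only: if_True)

lemma ribbon_nontop: "T \<notin> tops (tsize T) \<Longrightarrow> ribbon T = 0"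
  by (subst ribbon.simps) (simp only: if_False)

lemma ribbon_supp:
  "(ribbon T :: 'k::field vec) A \<noteq> 0 \<Longrightarrow> T \<in> tops (tsize T) \<and> A \<in> tops (tsize T) \<and> A \<subseteq> T"
proof (induction T rule: ribbon.induct)
  case (1 T)
  show ?case
  proof (cases "T \<in> tops (tsize T)")
    case False
    then show ?thesis using "1.prems" ribbon_nontop by (metis zero_fun_apply)
  next
    case True
    have "(ribbon T :: 'k vec) A = (bvec T :: 'k vec) A - (\<Sum>T'\<in>{T'\<in>tops (tsize T). T' \<subset> T}. (ribbon T' :: 'k vec) A)"
      by (subst ribbon_eq[OF True]) (simp add: sum_apply)
    then have "(bvec T :: 'k vec) A \<noteq> 0 \<or> (\<Sum>T'\<in>{T'\<in>tops (tsize T). T' \<subset> T}. (ribbon T' :: 'k vec) A) \<noteq> 0"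
      using "1.prems" by (metis diff_zero)
    then show ?thesis
    proof
      assume "(bvec T :: 'k vec) A \<noteq> 0"
      then have "A = T" by (simp add: bvec_def split: if_splits)
      then show ?thesis using True by simp
    next
      assume "(\<Sum>T'\<in>{T'\<in>tops (tsize T). T' \<subset> T}. (ribbon T' :: 'k vec) A) \<noteq> 0"
      then obtain T' where T'0: "T' \<in> {T'\<in>tops (tsize T). T' \<subset> T}" "(ribbon T' :: 'k vec) A \<noteq> 0"
        by (rule sum.not_neutral_contains_not_neutral)
      then have T': "T' \<in> tops (tsize T)" "T' \<subset> T" "(ribbon T' :: 'k vec) A \<noteq> 0" by auto
      have ts: "tsize T' = tsize T" using T'(1) tops_tsize by blast
      have "T' \<in> tops (tsize T') \<and> A \<in> tops (tsize T') \<and> A \<subseteq> T'"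
        using "1.IH"[OF True T'0(1) T'0(2)] by blast
      then have "A \<in> tops (tsize T)" "A \<subseteq> T" using ts T'(2) by auto
      then show ?thesis using True by blast
    qed
  qed
qed

lemma ribbon_sum:
  assumes "T \<in> tops n"
  shows "(\<Sum>T'\<in>{T'\<in>tops n. T' \<subseteq> T}. (ribbon T' :: 'k::field vec)) = bvec T"
proof -
  have ts: "tsize T = n" using assms tops_tsize by blast
  have r: "(ribbon T :: 'k vec) = bvec T - (\<Sum>T'\<in>{T'\<in>tops n. T' \<subset> T}. ribbon T')"
    using ribbon_eq[of T] assms ts by simp
  have "{T'\<in>tops n. T' \<subseteq> T} = insert T {T'\<in>tops n. T' \<subset> T}" using assms by auto
  then have "(\<Sum>T'\<in>{T'\<in>tops n. T' \<subseteq> T}. (ribbon T' :: 'k vec)) = ribbon T + (\<Sum>T'\<in>{T'\<in>tops n. T' \<subset> T}. ribbon T')"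
    using finite_tops by (simp add: sum.insert)
  then show ?thesis using r by simp
qed

lemma mobius_unique:
  fixes G H :: "'a \<Rightarrow> 'b::ab_group_add" and f :: "'a \<Rightarrow> nat"
  assumes fin: "\<And>x. x\<in>D \<Longrightarrow> finite {y\<in>D. le y x}"
  and refl: "\<And>x. x\<in>D \<Longrightarrow> le x x"
  and meas: "\<And>x y. x\<in>D \<Longrightarrow> y\<in>D \<Longrightarrow> le y x \<Longrightarrow> y\<noteq>x \<Longrightarrow> f y < f x"
  and eq: "\<And>x. x\<in>D \<Longrightarrow> (\<Sum>y\<in>{y\<in>D. le y x}. G y) = (\<Sum>y\<in>{y\<in>D. le y x}. H y)"
  shows "x\<in>D \<Longrightarrow> G x = H x"
proof (induction "f x" arbitrary: x rule: less_induct)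
  case less
  have split: "{y\<in>D. le y x} = insert x {y\<in>D. le y x \<and> y\<noteq>x}" using refl less.prems by auto
  have f2: "finite {y\<in>D. le y x \<and> y\<noteq>x}" using fin[OF less.prems] by (rule finite_subset[rotated]) auto
  have "(\<Sum>y\<in>{y\<in>D. le y x \<and> y\<noteq>x}. G y) = (\<Sum>y\<in>{y\<in>D. le y x \<and> y\<noteq>x}. H y)"
    by (rule sum.cong) (auto intro: less.hyps meas less.prems)
  moreover have "(\<Sum>y\<in>{y\<in>D. le y x}. G y) = G x + (\<Sum>y\<in>{y\<in>D. le y x \<and> y\<noteq>x}. G y)"
    by (subst split) (rule sum.insert[OF f2], simp)
  moreover have "(\<Sum>y\<in>{y\<in>D. le y x}. H y) = H x + (\<Sum>y\<in>{y\<in>D. le y x \<and> y\<noteq>x}. H y)"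
    by (subst split) (rule sum.insert[OF f2], simp)
  ultimately show ?case using eq[OF less.prems] by simp
qed



definition sm :: "nat set \<Rightarrow> nat \<Rightarrow> nat" where
  "sm X x = card {y\<in>X. y \<le> x}"

lemma sm_strict: "finite X \<Longrightarrow> x \<in> X \<Longrightarrow> x' \<in> X \<Longrightarrow> x < x' \<Longrightarrow> sm X x < sm X x'"
proof -
  assume a: "finite X" "x \<in> X" "x' \<in> X" "x < x'"
  have "{y\<in>X. y\<le>x} \<subseteq> {y\<in>X. y\<le>x'}" using a by auto
  moreover have "x' \<in> {y\<in>X. y\<le>x'}" "x' \<notin> {y\<in>X. y\<le>x}" using a by auto
  ultimately have "{y\<in>X. y\<le>x} \<subset> {y\<in>X. y\<le>x'}" by blast
  then show ?thesis unfolding sm_def by (rule psubset_card_mono[rotated]) (use a in auto)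
qed

lemma sm_inj: "finite X \<Longrightarrow> inj_on (sm X) X"
  unfolding inj_on_def by (metis linorder_neqE_nat sm_strict order_less_irrefl)

lemma sm_range: "finite X \<Longrightarrow> x \<in> X \<Longrightarrow> sm X x \<in> {1..card X}"
proof -
  assume f: "finite X" and x: "x \<in> X"
  have "{y\<in>X. y \<le> x} \<noteq> {}" using x by auto
  moreover have "finite {y\<in>X. y \<le> x}" using f by auto
  ultimately have "card {y\<in>X. y \<le> x} \<ge> 1" by (simp add: Suc_leI card_gt_0_iff)
  moreover have "card {y\<in>X. y \<le> x} \<le> card X" using f by (intro card_mono) auto
  ultimately show ?thesis unfolding sm_def by auto
qed

lemma sm_image: "finite X \<Longrightarrow> sm X ` X = {1..card X}"
proof -
  assume f: "finite X"
  have sub: "sm X ` X \<subseteq> {1..card X}" using sm_range[OF f] by auto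
  have "card (sm X ` X) = card X" using card_image[OF sm_inj[OF f]] .
  then show ?thesis using sub by (intro card_subset_eq) auto
qed

lemma sm_bij: "finite X \<Longrightarrow> bij_betw (sm X) X {1..card X}"
  by (simp add: bij_betw_def sm_inj sm_image)

lemma Std_eq: "Std M = (image (sm (\<Union>M))) ` M"
  unfolding Std_def sm_def by simp

lemma istop_transport:
  assumes "istop X M" "inj_on \<sigma> X"
  shows "istop (\<sigma> ` X) ((image \<sigma>) ` M)"
  unfolding istop_def
proof (intro conjI ballI)
  show "image \<sigma> ` M \<subseteq> Pow (\<sigma> ` X)" using assms(1) unfolding istop_def by auto
  show "{} \<in> image \<sigma> ` M" using assms(1) unfolding istop_def by (metis image_empty image_eqI)
  show "\<sigma> ` X \<in> image \<sigma> ` M" using assms(1) unfolding istop_def by auto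
next
  fix A B assume A: "A \<in> image \<sigma> ` M" and B: "B \<in> image \<sigma> ` M"
  then obtain A0 B0 where A0: "A0 \<in> M" "A = \<sigma> ` A0" and B0: "B0 \<in> M" "B = \<sigma> ` B0" by auto
  have sub: "A0 \<subseteq> X" "B0 \<subseteq> X" using A0 B0 assms(1) unfolding istop_def by auto
  have "A0 \<union> B0 \<in> M" "A0 \<inter> B0 \<in> M" using A0 B0 assms(1) unfolding istop_def by auto
  moreover have "A \<union> B = \<sigma> ` (A0 \<union> B0)" using A0 B0 by auto
  moreover have "A \<inter> B = \<sigma> ` (A0 \<inter> B0)" using A0 B0 inj_on_image_Int[OF assms(2) sub] by simp
  ultimately show "A \<union> B \<in> image \<sigma> ` M" "A \<inter> B \<in> image \<sigma> ` M" by auto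
qed

lemma Std_tops: "istop X M \<Longrightarrow> finite X \<Longrightarrow> Std M \<in> tops (card X)"
proof -
  assume t: "istop X M" and f: "finite X"
  have "\<Union>M = X" using istop_Union[OF t] .
  then have "Std M = (image (sm X)) ` M" by (simp add: Std_eq)
  moreover have "istop (sm X ` X) ((image (sm X)) ` M)" by (rule istop_transport[OF t sm_inj[OF f]])
  ultimately show ?thesis by (simp add: tops_istop sm_image[OF f])
qed

lemma restr_istop: "istop X M \<Longrightarrow> Y \<subseteq> X \<Longrightarrow> istop Y (restr M Y)"
  unfolding istop_def restr_def
proof (intro conjI ballI)
  assume t: "M \<subseteq> Pow X \<and> {} \<in> M \<and> X \<in> M \<and> (\<forall>A\<in>M. \<forall>B\<in>M. A \<union> B \<in> M \<and> A \<inter> B \<in> M)" and Y: "Y \<subseteq> X"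
  show "(\<lambda>U. U \<inter> Y) ` M \<subseteq> Pow Y" by auto
  show "{} \<in> (\<lambda>U. U \<inter> Y) ` M" using t by (metis Int_empty_left image_eqI)
  show "Y \<in> (\<lambda>U. U \<inter> Y) ` M" using t Y by (metis Int_absorb1 image_eqI)
  fix A B assume "A \<in> (\<lambda>U. U \<inter> Y) ` M" "B \<in> (\<lambda>U. U \<inter> Y) ` M"
  then obtain A0 B0 where "A0 \<in> M" "A = A0 \<inter> Y" "B0 \<in> M" "B = B0 \<inter> Y" by auto
  moreover have "A0 \<union> B0 \<in> M" "A0 \<inter> B0 \<in> M" using calculation t by auto
  moreover have "A \<union> B = (A0 \<union> B0) \<inter> Y" "A \<inter> B = (A0 \<inter> B0) \<inter> Y" using calculation by auto
  ultimately show "A \<union> B \<in> (\<lambda>U. U \<inter> Y) ` M" "A \<inter> B \<in> (\<lambda>U. U \<inter> Y) ` M"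
    by (metis rev_image_eqI)+
qed

lemma restr_Union: "istop X M \<Longrightarrow> Y \<subseteq> X \<Longrightarrow> \<Union>(restr M Y) = Y"
  using restr_istop istop_Union by blast

lemma restr_tops: "T \<in> tops (k + l) \<Longrightarrow> restr T {1..k} \<in> tops k"
  by (simp add: tops_istop restr_istop)

lemma rest_eq: "{1..k + l} - {1..k} = {Suc k..k + l}" by auto

lemma sm_shift: "x \<in> {Suc k..k + l} \<Longrightarrow> sm {Suc k..k + l} x = x - k"
proof -
  assume x: "x \<in> {Suc k..k + l}"
  have "{y\<in>{Suc k..k + l}. y \<le> x} = {Suc k..x}" using x by auto
  then show ?thesis unfolding sm_def by simp
qed

lemma Std_rest:
  assumes "T \<in> tops (k + l)"
  shows "Std (restr T ({1..k + l} - {1..k})) = (image (\<lambda>x. x - k)) ` restr T ({1..k + l} - {1..k})"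
    and "Std (restr T ({1..k + l} - {1..k})) \<in> tops l"
proof -
  let ?R = "{1..k + l} - {1..k}"
  have t: "istop {1..k+l} T" using assms tops_istop by blast
  have U: "\<Union>(restr T ?R) = {Suc k..k + l}" using restr_Union[OF t] rest_eq by auto
  have hW: "\<forall>W\<in>restr T ?R. sm {Suc k..k + l} ` W = (\<lambda>x. x - k) ` W"
  proof
    fix W assume "W \<in> restr T ?R"
    then have "W \<subseteq> {Suc k..k + l}" using U by blast
    then show "sm {Suc k..k + l} ` W = (\<lambda>x. x - k) ` W" using sm_shift by (intro image_cong) auto
  qed
  show "Std (restr T ?R) = (image (\<lambda>x. x - k)) ` restr T ?R"
    unfolding Std_eq U by (rule image_cong[OF refl]) (rule hW[rule_format])
  show "Std (restr T ?R) \<in> tops l"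
  proof -
    have c: "card ?R = l" by (subst rest_eq) simp
    have "Std (restr T ?R) \<in> tops (card ?R)" using Std_tops[OF restr_istop[OF t], of ?R] by auto
    then show ?thesis by (simp only: c)
  qed
qed


lemma bilin_eq:
  assumes "finite X" "finite Y" "supp x \<subseteq> X" "supp y \<subseteq> Y"
  shows "bilin f x y = (\<lambda>S. \<Sum>A\<in>X. \<Sum>B\<in>Y. if f A B = S then x A * y B else 0)"
proof
  fix S
  have fx: "finite (supp x)" "finite (supp y)" using assms finite_subset by auto
  have "(\<Sum>A\<in>supp x. \<Sum>B\<in>supp y. if f A B = S then x A * y B else 0)
      = (\<Sum>A\<in>supp x. \<Sum>B\<in>Y. if f A B = S then x A * y B else 0)"
    by (rule sum.cong[OF refl], rule sum.mono_neutral_left) (use assms in \<open>auto simp: supp_def\<close>)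
  also have "\<dots> = (\<Sum>A\<in>X. \<Sum>B\<in>Y. if f A B = S then x A * y B else 0)"
    by (rule sum.mono_neutral_left) (use assms in \<open>auto simp: supp_def intro!: sum.neutral split: if_splits\<close>)
  finally show "bilin f x y S = (\<Sum>A\<in>X. \<Sum>B\<in>Y. if f A B = S then x A * y B else 0)"
    unfolding bilin_def .
qed

lemma supp_ribbon: "T \<in> tops n \<Longrightarrow> supp (ribbon T) \<subseteq> tops n"
  using ribbon_supp tops_tsize unfolding supp_def by fastforce

lemma bvec_apply: "(bvec T :: 'k::field vec) A = (if A = T then 1 else 0)"
  by (simp add: bvec_def)

lemma sum_if_const: "(\<Sum>p\<in>P. if c then g p else 0) = (if c then sum g P else 0)"
  by simp

lemma bilin_ribbon_sum:
  assumes T: "T \<in> tops k" and T': "T' \<in> tops l"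
  shows "(\<Sum>p\<in>{S\<in>tops k. S \<subseteq> T} \<times> {S'\<in>tops l. S' \<subseteq> T'}. bilin f (ribbon (fst p)) (ribbon (snd p)))
      = (bvec (f T T') :: 'k::field vec)"
proof
  fix S0
  let ?P = "{S\<in>tops k. S \<subseteq> T}" and ?Q = "{S'\<in>tops l. S' \<subseteq> T'}"
  have "(\<Sum>p\<in>?P \<times> ?Q. bilin f (ribbon (fst p)) (ribbon (snd p)) :: 'k vec) S0
      = (\<Sum>p\<in>?P \<times> ?Q. \<Sum>A\<in>tops k. \<Sum>B\<in>tops l. if f A B = S0 then (ribbon (fst p) :: 'k vec) A * (ribbon (snd p) :: 'k vec) B else 0)"
    unfolding sum_apply
  proof (rule sum.cong[OF refl])
    fix p assume "p \<in> ?P \<times> ?Q"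
    then have h: "fst p \<in> tops k" "snd p \<in> tops l" by auto
    show "bilin f (ribbon (fst p)) (ribbon (snd p)) S0 = (\<Sum>A\<in>tops k. \<Sum>B\<in>tops l. if f A B = S0 then (ribbon (fst p) :: 'k vec) A * (ribbon (snd p) :: 'k vec) B else 0)"
      by (simp only: bilin_eq[OF finite_tops finite_tops supp_ribbon[OF h(1)] supp_ribbon[OF h(2)]])
  qed
  also have "\<dots> = (\<Sum>A\<in>tops k. \<Sum>B\<in>tops l. if f A B = S0 then (\<Sum>p\<in>?P \<times> ?Q. (ribbon (fst p) :: 'k vec) A * (ribbon (snd p) :: 'k vec) B) else 0)"
  proof -
    have "\<And>h :: _ \<Rightarrow> _ \<Rightarrow> _ \<Rightarrow> 'k. (\<Sum>p\<in>?P \<times> ?Q. \<Sum>A\<in>tops k. \<Sum>B\<in>tops l. h p A B) = (\<Sum>A\<in>tops k. \<Sum>B\<in>tops l. \<Sum>p\<in>?P \<times> ?Q. h p A B)"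
      by (subst sum.swap) (rule sum.cong[OF refl], rule sum.swap)
    then show ?thesis by (simp only: sum_if_const)
  qed
  also have "\<dots> = (\<Sum>A\<in>tops k. \<Sum>B\<in>tops l. if f A B = S0 then (bvec T :: 'k vec) A * (bvec T' :: 'k vec) B else 0)"
  proof -
    have "\<And>A B. (\<Sum>p\<in>?P \<times> ?Q. (ribbon (fst p) :: 'k vec) A * (ribbon (snd p) :: 'k vec) B) = (bvec T :: 'k vec) A * (bvec T' :: 'k vec) B"
    proof -
      fix A B
      have "(\<Sum>p\<in>?P \<times> ?Q. (ribbon (fst p) :: 'k vec) A * (ribbon (snd p) :: 'k vec) B)
          = (\<Sum>S\<in>?P. (ribbon S :: 'k vec) A) * (\<Sum>S'\<in>?Q. (ribbon S' :: 'k vec) B)"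
        by (simp add: sum_product sum.cartesian_product case_prod_beta)
      also have "\<dots> = (bvec T :: 'k vec) A * (bvec T' :: 'k vec) B"
      proof -
        have "(\<Sum>S\<in>?P. (ribbon S :: 'k vec) A) = (bvec T :: 'k vec) A"
          by (simp add: ribbon_sum[OF T, symmetric] sum_apply)
        moreover have "(\<Sum>S\<in>?Q. (ribbon S :: 'k vec) B) = (bvec T' :: 'k vec) B"
          by (simp add: ribbon_sum[OF T', symmetric] sum_apply)
        ultimately show ?thesis by simp
      qed
      finally show "?thesis A B" .
    qed
    note hAB = this
    show ?thesis by (simp only: hAB)
  qed
  also have "\<dots> = (bvec (f T T') :: 'k vec) S0"
  proof -
    have "(\<Sum>A\<in>tops k. \<Sum>B\<in>tops l. if f A B = S0 then (bvec T :: 'k vec) A * (bvec T' :: 'k vec) B else 0)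
        = (\<Sum>A\<in>tops k. if A = T then (\<Sum>B\<in>tops l. if B = T' then (if f T T' = S0 then 1 else 0) else 0) else 0)"
    proof -
      have e: "\<And>A B. (if f A B = S0 then (bvec T::'k vec) A * (bvec T'::'k vec) B else 0) = (if A = T then (if B = T' then (if f T T' = S0 then 1 else 0) else 0) else 0)"
        by (simp add: bvec_apply)
      show ?thesis by (simp only: e sum_if_const)
    qed
    also have "\<dots> = (if f T T' = S0 then 1 else 0)" by (simp only: sum_if_const sum.delta finite_tops if_True T T')
    finally show ?thesis by (simp add: bvec_apply eq_commute)
  qed
  finally show "(\<Sum>p\<in>?P \<times> ?Q. bilin f (ribbon (fst p)) (ribbon (snd p)) :: 'k vec) S0 = (bvec (f T T') :: 'k vec) S0" .
qed



lemma shift_in: "x \<in> shift U k \<longleftrightarrow> (\<exists>u\<in>U. x = u + k)"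
  unfolding shift_def by auto

lemma sh_img: "W \<subseteq> {Suc k..} \<Longrightarrow> shift ((\<lambda>x. x - k) ` W) k = W"
  unfolding shift_def image_image
  by (rule trans[OF image_cong[OF refl] image_ident]) auto

lemma img_sh: "(\<lambda>x. x - k) ` shift U k = U"
  unfolding shift_def image_image by simp

lemma sh_sub: "U \<subseteq> {1..l} \<Longrightarrow> shift U k \<subseteq> {Suc k..k + l}"
  unfolding shift_def by auto

lemma sh_full: "shift {1..l} k = {Suc k..k + l}"
proof -
  have "shift {1..l} k \<subseteq> {Suc k..k + l}" by (rule sh_sub) simp
  moreover have "{Suc k..k + l} \<subseteq> shift {1..l} k"
  proof
    fix x assume "x \<in> {Suc k..k + l}"
    then have "x - k \<in> {1..l}" "x = (x - k) + k" by auto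
    then show "x \<in> shift {1..l} k" unfolding shift_def by blast
  qed
  ultimately show ?thesis by blast
qed

lemma sh_Un: "shift (A \<union> B) k = shift A k \<union> shift B k"
  unfolding shift_def by auto

lemma sh_Int: "shift (A \<inter> B) k = shift A k \<inter> shift B k"
  unfolding shift_def by (rule image_Int) (simp add: inj_on_def)

lemma sh_empty: "shift {} k = {}" unfolding shift_def by simp

lemma tops_sub: "T \<in> tops n \<Longrightarrow> U \<in> T \<Longrightarrow> U \<subseteq> {1..n}"
  unfolding tops_def by auto

lemma tops_closed: "T \<in> tops n \<Longrightarrow> A \<in> T \<Longrightarrow> B \<in> T \<Longrightarrow> A \<union> B \<in> T \<and> A \<inter> B \<in> T"
  unfolding tops_def by auto

lemma tops_empty: "T \<in> tops n \<Longrightarrow> {} \<in> T" unfolding tops_def by auto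
lemma tops_full: "T \<in> tops n \<Longrightarrow> {1..n} \<in> T" unfolding tops_def by auto

lemma tdot_mem:
  assumes "T \<in> tops k"
  shows "V \<in> tdot T T' \<longleftrightarrow> (\<exists>U\<in>T. \<exists>U'\<in>T'. V = U \<union> shift U' k)"
  using tops_tsize[OF assms] unfolding tdot_def by auto

lemma tdown_mem:
  assumes "T \<in> tops k" "T' \<in> tops l"
  shows "V \<in> tdown T T' \<longleftrightarrow> (\<exists>U\<in>T. V = U \<union> {Suc k..k + l}) \<or> (\<exists>U'\<in>T'. V = shift U' k)"
  using tops_tsize[OF assms(1)] tops_tsize[OF assms(2)] sh_full unfolding tdown_def by auto

lemma disj_Int: "A1 \<subseteq> {1..k} \<Longrightarrow> A2 \<subseteq> {1..k} \<Longrightarrow> B1 \<subseteq> {Suc k..k+l} \<Longrightarrow> B2 \<subseteq> {Suc k..k+l} \<Longrightarrow>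
   (A1 \<union> B1) \<inter> (A2 \<union> B2) = (A1 \<inter> A2) \<union> (B1 \<inter> B2)"
  by (auto; (drule (1) subsetD)+; simp)

lemma tdot_tops:
  assumes T: "T \<in> tops k" and T': "T' \<in> tops l"
  shows "tdot T T' \<in> tops (k + l)"
  unfolding tops_def mem_Collect_eq
proof (intro conjI ballI)
  show "tdot T T' \<subseteq> Pow {1..k + l}"
  proof
    fix V assume "V \<in> tdot T T'"
    then obtain U U' where "U \<in> T" "U' \<in> T'" "V = U \<union> shift U' k" using tdot_mem[OF T] by auto
    moreover have "U \<subseteq> {1..k}" "shift U' k \<subseteq> {Suc k..k+l}" using calculation tops_sub T T' sh_sub by auto
    ultimately show "V \<in> Pow {1..k + l}" by auto
  qed
  show "{} \<in> tdot T T'" using tdot_mem[OF T] tops_empty[OF T] tops_empty[OF T'] sh_empty by fastforce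
  have "{1..k + l} = {1..k} \<union> shift {1..l} k" using sh_full by auto
  then show "{1..k + l} \<in> tdot T T'" using tdot_mem[OF T] tops_full[OF T] tops_full[OF T'] by blast
next
  fix A B assume "A \<in> tdot T T'" "B \<in> tdot T T'"
  then obtain U1 U1' U2 U2' where u: "U1 \<in> T" "U1' \<in> T'" "A = U1 \<union> shift U1' k"
     "U2 \<in> T" "U2' \<in> T'" "B = U2 \<union> shift U2' k" using tdot_mem[OF T] by meson
  have s: "U1 \<subseteq> {1..k}" "U2 \<subseteq> {1..k}" "shift U1' k \<subseteq> {Suc k..k+l}" "shift U2' k \<subseteq> {Suc k..k+l}"
    using u tops_sub T T' sh_sub by auto
  have "A \<union> B = (U1 \<union> U2) \<union> shift (U1' \<union> U2') k" using u sh_Un by auto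
  moreover have "A \<inter> B = (U1 \<inter> U2) \<union> shift (U1' \<inter> U2') k" using u disj_Int[OF s] sh_Int by auto
  moreover have "U1 \<union> U2 \<in> T" "U1 \<inter> U2 \<in> T" using u tops_closed[OF T] by auto
  moreover have "U1' \<union> U2' \<in> T'" "U1' \<inter> U2' \<in> T'" using u tops_closed[OF T'] by auto
  ultimately show "A \<union> B \<in> tdot T T'" "A \<inter> B \<in> tdot T T'" using tdot_mem[OF T] by blast+
qed

lemma tdown_tops:
  assumes T: "T \<in> tops k" and T': "T' \<in> tops l"
  shows "tdown T T' \<in> tops (k + l)"
  unfolding tops_def mem_Collect_eq
proof (intro conjI ballI)
  note m = tdown_mem[OF T T']
  show "tdown T T' \<subseteq> Pow {1..k + l}"
  proof
    fix V assume "V \<in> tdown T T'"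
    then consider U where "U \<in> T" "V = U \<union> {Suc k..k + l}" | U' where "U' \<in> T'" "V = shift U' k" using m by blast
    then show "V \<in> Pow {1..k + l}"
    proof cases
      case 1 then show ?thesis using tops_sub[OF T, of U] by auto
    next
      case 2 then show ?thesis using tops_sub[OF T'] sh_sub[of U' l k] by auto
    qed
  qed
  show "{} \<in> tdown T T'" using m tops_empty[OF T'] sh_empty by metis
  have "{1..k + l} = {1..k} \<union> {Suc k..k + l}" by auto
  then show "{1..k + l} \<in> tdown T T'" using m tops_full[OF T] by blast
next
  fix A B assume A: "A \<in> tdown T T'" and B: "B \<in> tdown T T'"
  note m = tdown_mem[OF T T']
  let ?R = "{Suc k..k + l}"
  have cl: "U1 \<union> U2 \<in> T" "U1 \<inter> U2 \<in> T" if "U1 \<in> T" "U2 \<in> T" for U1 U2 using that tops_closed[OF T] by auto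
  have cl': "U1 \<union> U2 \<in> T'" "U1 \<inter> U2 \<in> T'" if "U1 \<in> T'" "U2 \<in> T'" for U1 U2 using that tops_closed[OF T'] by auto
  have sb: "U \<subseteq> {1..k}" if "U \<in> T" for U using that tops_sub[OF T] by auto
  have sb': "shift U' k \<subseteq> ?R" if "U' \<in> T'" for U' using that tops_sub[OF T'] sh_sub by blast
  have mem1: "V \<in> tdown T T'" if "U \<in> T" "V = U \<union> ?R" for U V using m that by blast
  have mem2: "V \<in> tdown T T'" if "U' \<in> T'" "V = shift U' k" for U' V using m that by blast
  have "A \<union> B \<in> tdown T T' \<and> A \<inter> B \<in> tdown T T'"
  proof -
    consider U1 where "U1 \<in> T" "A = U1 \<union> ?R" | U1' where "U1' \<in> T'" "A = shift U1' k" using A m by blast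
    then show ?thesis
    proof cases
      case a1: 1
      consider U2 where "U2 \<in> T" "B = U2 \<union> ?R" | U2' where "U2' \<in> T'" "B = shift U2' k" using B m by blast
      then show ?thesis
      proof cases
        case 1
        have e: "A \<union> B = (U1 \<union> U2) \<union> ?R" "A \<inter> B = (U1 \<inter> U2) \<union> ?R" using a1 1 by auto
        show ?thesis using mem1[OF cl(1)[OF a1(1) 1(1)] e(1)] mem1[OF cl(2)[OF a1(1) 1(1)] e(2)] by blast
      next
        case 2
        have e1: "A \<union> B = U1 \<union> ?R" using a1 2 sb' by auto
        have e2: "A \<inter> B = shift U2' k" using a1 2 sb'[OF 2(1)] sb[OF a1(1)] by auto
        show ?thesis using mem1[OF a1(1) e1] mem2[OF 2(1) e2] by blast
      qed
    next
      case a2: 2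
      consider U2 where "U2 \<in> T" "B = U2 \<union> ?R" | U2' where "U2' \<in> T'" "B = shift U2' k" using B m by blast
      then show ?thesis
      proof cases
        case 1
        have e1: "A \<union> B = U2 \<union> ?R" using a2 1 sb' by auto
        have e2: "A \<inter> B = shift U1' k" using a2 1 sb'[OF a2(1)] sb[OF 1(1)] by auto
        show ?thesis using mem1[OF 1(1) e1] mem2[OF a2(1) e2] by blast
      next
        case 2
        have e: "A \<union> B = shift (U1' \<union> U2') k" "A \<inter> B = shift (U1' \<inter> U2') k" using a2 2 sh_Un sh_Int by auto
        show ?thesis using mem2[OF cl'(1)[OF a2(1) 2(1)] e(1)] mem2[OF cl'(2)[OF a2(1) 2(1)] e(2)] by blast
      qed
    qed
  qed
  then show "A \<union> B \<in> tdown T T'" "A \<inter> B \<in> tdown T T'" by auto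
qed



lemma restr_mem: "V \<in> T \<Longrightarrow> V \<inter> Y \<in> restr T Y"
  unfolding restr_def by blast

lemma restr_cases: "x \<in> restr T Y \<Longrightarrow> \<exists>V\<in>T. x = V \<inter> Y"
  unfolding restr_def by blast

lemma Std_rest_mem:
  assumes "T'' \<in> tops (k + l)" "V \<in> T''"
  shows "(\<lambda>x. x - k) ` (V \<inter> ({1..k + l} - {1..k})) \<in> Std (restr T'' ({1..k + l} - {1..k}))"
  by (subst Std_rest(1)[OF assms(1)]) (rule imageI, rule restr_mem[OF assms(2)])

lemma Std_rest_cases:
  assumes "T'' \<in> tops (k + l)" "x \<in> Std (restr T'' ({1..k + l} - {1..k}))"
  shows "\<exists>V\<in>T''. x = (\<lambda>x. x - k) ` (V \<inter> ({1..k + l} - {1..k}))"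
  using assms(2) unfolding Std_rest(1)[OF assms(1)] unfolding restr_def by blast

lemma le_tdot:
  assumes T'': "T'' \<in> tops (k + l)" and T: "T \<in> tops k" and T': "T' \<in> tops l"
  shows "T'' \<subseteq> tdot T T' \<longleftrightarrow> restr T'' {1..k} \<subseteq> T \<and> Std (restr T'' ({1..k + l} - {1..k})) \<subseteq> T'"
proof -
  let ?R = "{1..k + l} - {1..k}"
  have R: "?R = {Suc k..k + l}" by (rule rest_eq)
  have S: "Std (restr T'' ?R) = (image (\<lambda>x. x - k)) ` restr T'' ?R" by (rule Std_rest(1)[OF T''])
  show ?thesis
  proof
    assume h: "T'' \<subseteq> tdot T T'"
    have "V \<inter> {1..k} \<in> T \<and> (\<lambda>x. x - k) ` (V \<inter> ?R) \<in> T'" if "V \<in> T''" for V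
    proof -
      have "V \<in> tdot T T'" using h that by blast
      then have "\<exists>U\<in>T. \<exists>U'\<in>T'. V = U \<union> shift U' k" by (simp only: tdot_mem[OF T])
      then obtain U U' where u: "U \<in> T" "U' \<in> T'" "V = U \<union> shift U' k" by blast
      have s: "U \<subseteq> {1..k}" "shift U' k \<subseteq> {Suc k..k+l}" using u tops_sub T T' sh_sub by auto
      have "V \<inter> {1..k} = U" using u(3) s by auto
      moreover have "V \<inter> ?R = shift U' k" using u(3) s unfolding R by auto
      ultimately show ?thesis using u img_sh by auto
    qed
    note hh = this
    have "restr T'' {1..k} \<subseteq> T" using hh restr_cases by blast
    moreover have "Std (restr T'' ?R) \<subseteq> T'"
    proof
      fix x assume "x \<in> Std (restr T'' ?R)"
      then obtain V where "V \<in> T''" "x = (\<lambda>x. x - k) ` (V \<inter> ?R)" using Std_rest_cases[OF T''] by blast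
      then show "x \<in> T'" using hh by simp
    qed
    ultimately show "restr T'' {1..k} \<subseteq> T \<and> Std (restr T'' ?R) \<subseteq> T'" by blast
  next
    assume h: "restr T'' {1..k} \<subseteq> T \<and> Std (restr T'' ?R) \<subseteq> T'"
    show "T'' \<subseteq> tdot T T'"
    proof
      fix V assume V: "V \<in> T''"
      have "V \<inter> {1..k} \<in> T" using h restr_mem[OF V] by blast
      moreover have "(\<lambda>x. x - k) ` (V \<inter> ?R) \<in> T'" using h Std_rest_mem[OF T'' V] by blast
      moreover have "V = (V \<inter> {1..k}) \<union> shift ((\<lambda>x. x - k) ` (V \<inter> ?R)) k"
      proof -
        have "shift ((\<lambda>x. x - k) ` (V \<inter> ?R)) k = V \<inter> ?R" by (rule sh_img) (auto simp: R)
        moreover have "V \<subseteq> {1..k + l}" using tops_sub[OF T'' V] .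
        ultimately show ?thesis by auto
      qed
      ultimately show "V \<in> tdot T T'" unfolding tdot_mem[OF T] by blast
    qed
  qed
qed

lemma le_tdown:
  assumes T'': "T'' \<in> tops (k + l)" and T: "T \<in> tops k" and T': "T' \<in> tops l"
  shows "T'' \<subseteq> tdown T T' \<longleftrightarrow> restr T'' {1..k} \<subseteq> T \<and> Std (restr T'' ({1..k + l} - {1..k})) \<subseteq> T'
          \<and> tleq_set T'' {1..k} ({1..k + l} - {1..k})"
proof -
  let ?R = "{1..k + l} - {1..k}"
  have R: "?R = {Suc k..k + l}" by (rule rest_eq)
  note m = tdown_mem[OF T T']
  show ?thesis
  proof
    assume h: "T'' \<subseteq> tdown T T'"
    have "V \<inter> {1..k} \<in> T \<and> (\<lambda>x. x - k) ` (V \<inter> ?R) \<in> T' \<and> (V \<inter> {1..k} \<noteq> {} \<longrightarrow> ?R \<subseteq> V)" if "V \<in> T''" for V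
    proof -
      have "V \<in> tdown T T'" using h that by blast
      then have "(\<exists>U\<in>T. V = U \<union> {Suc k..k + l}) \<or> (\<exists>U'\<in>T'. V = shift U' k)" by (simp only: m)
      then consider U where "U \<in> T" "V = U \<union> {Suc k..k + l}" | U' where "U' \<in> T'" "V = shift U' k"
        by blast
      then show ?thesis
      proof cases
        case 1
        have s: "U \<subseteq> {1..k}" using 1 tops_sub T by auto
        have "V \<inter> {1..k} = U" using 1 s by auto
        moreover have "V \<inter> ?R = shift {1..l} k" using 1 s unfolding R sh_full by auto
        moreover have "?R \<subseteq> V" using 1 R by auto
        ultimately show ?thesis using 1 img_sh tops_full[OF T'] by auto
      next
        case 2
        have s: "shift U' k \<subseteq> {Suc k..k+l}" using 2 tops_sub T' sh_sub by auto
        have "V \<inter> {1..k} = {}" using 2 s by auto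
        moreover have "V \<inter> ?R = shift U' k" using 2 s unfolding R by auto
        ultimately show ?thesis using 2 img_sh tops_empty[OF T] by auto
      qed
    qed
    note hh = this
    have "restr T'' {1..k} \<subseteq> T" using hh restr_cases by blast
    moreover have "Std (restr T'' ?R) \<subseteq> T'"
    proof
      fix x assume "x \<in> Std (restr T'' ?R)"
      then obtain V where "V \<in> T''" "x = (\<lambda>x. x - k) ` (V \<inter> ?R)" using Std_rest_cases[OF T''] by blast
      then show "x \<in> T'" using hh by simp
    qed
    moreover have "tleq_set T'' {1..k} ?R"
      unfolding tleq_set_def tleq_def
    proof (intro ballI impI)
      fix i j V assume a: "i \<in> {1..k}" "j \<in> ?R" "V \<in> T''" "i \<in> V"
      then have "V \<inter> {1..k} \<noteq> {}" by auto
      then have "?R \<subseteq> V" using hh[OF a(3)] by blast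
      then show "j \<in> V" using a(2) by blast
    qed
    ultimately show "restr T'' {1..k} \<subseteq> T \<and> Std (restr T'' ?R) \<subseteq> T' \<and> tleq_set T'' {1..k} ?R" by blast
  next
    assume h: "restr T'' {1..k} \<subseteq> T \<and> Std (restr T'' ?R) \<subseteq> T' \<and> tleq_set T'' {1..k} ?R"
    show "T'' \<subseteq> tdown T T'"
    proof
      fix V assume V: "V \<in> T''"
      have Vs: "V \<subseteq> {1..k + l}" using tops_sub[OF T'' V] .
      show "V \<in> tdown T T'"
      proof (cases "V \<inter> {1..k} = {}")
        case True
        have a: "(\<lambda>x. x - k) ` (V \<inter> ?R) \<in> T'" using h Std_rest_mem[OF T'' V] by blast
        have b: "shift ((\<lambda>x. x - k) ` (V \<inter> ?R)) k = V \<inter> ?R" by (rule sh_img) (auto simp: R)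
        have c: "V \<inter> ?R = V" using True Vs by auto
        have "\<exists>U'\<in>T'. V = shift U' k" using a b c by metis
        then show ?thesis unfolding m by blast
      next
        case False
        then obtain i where i: "i \<in> V" "i \<in> {1..k}" by blast
        have "?R \<subseteq> V"
        proof
          fix j assume "j \<in> ?R"
          then have "tleq T'' i j" using h i unfolding tleq_set_def by auto
          then show "j \<in> V" using V i unfolding tleq_def by auto
        qed
        then have a: "V = (V \<inter> {1..k}) \<union> {Suc k..k + l}" using Vs R by auto
        have b: "V \<inter> {1..k} \<in> T" using h restr_mem[OF V] by blast
        have "\<exists>U\<in>T. V = U \<union> {Suc k..k + l}" using a b by blast
        then show ?thesis unfolding m by blast
      qed
    qed
  qed
qed



lemma sum_fibers:
  assumes "finite E0" "finite P"
  shows "(\<Sum>p\<in>P. \<Sum>x\<in>{x\<in>E0. g x = p}. h x) = (\<Sum>x\<in>{x\<in>E0. g x \<in> P}. h x)"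
proof -
  have "(\<Sum>x\<in>{x\<in>E0. g x \<in> P}. h x) = (\<Sum>p\<in>P. \<Sum>x\<in>{x. x \<in> {x\<in>E0. g x \<in> P} \<and> g x = p}. h x)"
    by (rule sum.group[symmetric]) (use assms in auto)
  also have "\<dots> = (\<Sum>p\<in>P. \<Sum>x\<in>{x\<in>E0. g x = p}. h x)"
    by (rule sum.cong[OF refl], rule sum.cong) auto
  finally show ?thesis by simp
qed

lemma product_formula:
  fixes f :: "nat set set \<Rightarrow> nat set set \<Rightarrow> nat set set" and c :: "nat set set \<Rightarrow> bool"
  assumes ftop: "\<And>T T'. T \<in> tops k \<Longrightarrow> T' \<in> tops l \<Longrightarrow> f T T' \<in> tops (k + l)"
  and char: "\<And>T T' T''. T \<in> tops k \<Longrightarrow> T' \<in> tops l \<Longrightarrow> T'' \<in> tops (k + l) \<Longrightarrow>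
     T'' \<subseteq> f T T' \<longleftrightarrow> restr T'' {1..k} \<subseteq> T \<and> Std (restr T'' ({1..k + l} - {1..k})) \<subseteq> T' \<and> c T''"
  and T: "T \<in> tops k" and T': "T' \<in> tops l"
  shows "bilin f (ribbon T) (ribbon T') =
      (\<Sum>T''\<in>{T''\<in>tops (k + l). restr T'' {1..k} = T \<and>
                 Std (restr T'' ({1..k + l} - {1..k})) = T' \<and> c T''}. (ribbon T'' :: 'k::field vec))"
proof -
  let ?R = "{1..k + l} - {1..k}"
  let ?D = "tops k \<times> tops l"
  let ?le = "\<lambda>p q. fst p \<subseteq> fst q \<and> snd p \<subseteq> snd q"
  let ?G = "\<lambda>p. (bilin f (ribbon (fst p)) (ribbon (snd p)) :: 'k vec)"
  let ?F = "\<lambda>S S'. {T''\<in>tops (k + l). restr T'' {1..k} = S \<and> Std (restr T'' ?R) = S' \<and> c T''}"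
  let ?H = "\<lambda>p. (\<Sum>T''\<in>?F (fst p) (snd p). (ribbon T'' :: 'k vec))"
  let ?g = "\<lambda>x. (restr x {1..k}, Std (restr x ?R))"
  have "?G (T, T') = ?H (T, T')"
  proof (rule mobius_unique[where D = ?D and le = ?le and f = "\<lambda>p. card (fst p) + card (snd p)"])
    fix x assume "x \<in> ?D"
    have "finite ?D" by (intro finite_cartesian_product finite_tops)
    then show "finite {y\<in>?D. ?le y x}" by (rule finite_subset[rotated]) blast
  next
    fix x assume "x \<in> ?D" then show "?le x x" by simp
  next
    fix x y assume x: "x \<in> ?D" and y: "y \<in> ?D" and le: "?le y x" and ne: "y \<noteq> x"
    have f: "finite (fst x)" "finite (snd x)" using x tops_finite by auto
    have "card (fst y) \<le> card (fst x)" "card (snd y) \<le> card (snd x)" using le f by (auto intro: card_mono)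
    moreover have "card (fst y) < card (fst x) \<or> card (snd y) < card (snd x)"
    proof (cases "fst y = fst x")
      case True
      then have "snd y \<noteq> snd x" using ne by (simp add: prod_eq_iff)
      then have "snd y \<subset> snd x" using le by blast
      then show ?thesis using f by (auto intro: psubset_card_mono)
    next
      case False
      then have "fst y \<subset> fst x" using le by auto
      then show ?thesis using f by (auto intro: psubset_card_mono)
    qed
    ultimately show "card (fst y) + card (snd y) < card (fst x) + card (snd x)" by linarith
  next
    fix x assume x: "x \<in> ?D"
    obtain S0 S0' where x': "x = (S0, S0')" "S0 \<in> tops k" "S0' \<in> tops l" using x by auto
    let ?P = "{S\<in>tops k. S \<subseteq> S0}" and ?Q = "{S'\<in>tops l. S' \<subseteq> S0'}"
    have Dx: "{y\<in>?D. ?le y x} = ?P \<times> ?Q" using x' by auto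
    have G: "(\<Sum>y\<in>?P \<times> ?Q. ?G y) = bvec (f S0 S0')" by (rule bilin_ribbon_sum[OF x'(2,3)])
    have "(\<Sum>y\<in>?P \<times> ?Q. ?H y) = (\<Sum>y\<in>?P \<times> ?Q. \<Sum>T''\<in>{x\<in>{T''\<in>tops (k + l). c T''}. ?g x = y}. (ribbon T'' :: 'k vec))"
    proof (rule sum.cong[OF refl])
      fix y assume "y \<in> ?P \<times> ?Q"
      obtain a b where y: "y = (a, b)" by (cases y)
      have "?F (fst y) (snd y) = {x\<in>{T''\<in>tops (k + l). c T''}. ?g x = y}"
        unfolding y by auto
      then show "?H y = (\<Sum>T''\<in>{x\<in>{T''\<in>tops (k + l). c T''}. ?g x = y}. (ribbon T'' :: 'k vec))" by simp
    qed
    also have "\<dots> = (\<Sum>T''\<in>{x\<in>{T''\<in>tops (k + l). c T''}. ?g x \<in> ?P \<times> ?Q}. (ribbon T'' :: 'k vec))"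
      by (rule sum_fibers) (use finite_tops in auto)
    also have "{x\<in>{T''\<in>tops (k + l). c T''}. ?g x \<in> ?P \<times> ?Q} = {T''\<in>tops (k + l). T'' \<subseteq> f S0 S0'}"
    proof (rule set_eqI)
      fix x
      show "x \<in> {x\<in>{T''\<in>tops (k + l). c T''}. ?g x \<in> ?P \<times> ?Q} \<longleftrightarrow> x \<in> {T''\<in>tops (k + l). T'' \<subseteq> f S0 S0'}"
      proof (cases "x \<in> tops (k + l)")
        case True
        have tk: "restr x {1..k} \<in> tops k" and tl: "Std (restr x ?R) \<in> tops l"
          using restr_tops[OF True] Std_rest(2)[OF True] by auto
        have "x \<in> {x\<in>{T''\<in>tops (k + l). c T''}. ?g x \<in> ?P \<times> ?Q} \<longleftrightarrow>
             restr x {1..k} \<subseteq> S0 \<and> Std (restr x ?R) \<subseteq> S0' \<and> c x"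
          using True tk tl by blast
        also have "\<dots> \<longleftrightarrow> x \<subseteq> f S0 S0'" by (rule char[OF x'(2,3) True, symmetric])
        also have "\<dots> \<longleftrightarrow> x \<in> {T''\<in>tops (k + l). T'' \<subseteq> f S0 S0'}" using True by blast
        finally show ?thesis .
      next
        case False then show ?thesis by simp
      qed
    qed
    also have "(\<Sum>T''\<in>{T''\<in>tops (k + l). T'' \<subseteq> f S0 S0'}. (ribbon T'' :: 'k vec)) = bvec (f S0 S0')"
      by (rule ribbon_sum[OF ftop[OF x'(2,3)]])
    finally show "(\<Sum>y\<in>{y\<in>?D. ?le y x}. ?G y) = (\<Sum>y\<in>{y\<in>?D. ?le y x}. ?H y)"
      unfolding Dx using G by simp
  next
    show "(T, T') \<in> ?D" using T T' by simp
  qed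
  then show ?thesis by simp
qed



lemma part1:
  assumes T: "T \<in> tops k" and T': "T' \<in> tops l"
  shows "prod_dot (ribbon T) (ribbon T') =
      (\<Sum>T''\<in>{T''\<in>tops (k + l). restr T'' {1..k} = T \<and>
                 Std (restr T'' ({1..k + l} - {1..k})) = T'}. (ribbon T'' :: 'k::field vec))"
proof -
  have "bilin tdot (ribbon T) (ribbon T') =
      (\<Sum>T''\<in>{T''\<in>tops (k + l). restr T'' {1..k} = T \<and>
                 Std (restr T'' ({1..k + l} - {1..k})) = T' \<and> True}. (ribbon T'' :: 'k vec))"
    by (rule product_formula[OF _ _ T T'], erule (1) tdot_tops, subst le_tdot, assumption+, simp only: simp_thms)
  then show ?thesis unfolding prod_dot_def by (simp only: simp_thms)
qed

lemma part2:
  assumes T: "T \<in> tops k" and T': "T' \<in> tops l"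
  shows "prod_down (ribbon T) (ribbon T') =
      (\<Sum>T''\<in>{T''\<in>tops (k + l). restr T'' {1..k} = T \<and>
                 Std (restr T'' ({1..k + l} - {1..k})) = T' \<and>
                 tleq_set T'' {1..k} ({1..k + l} - {1..k})}. (ribbon T'' :: 'k::field vec))"
  unfolding prod_down_def
  by (rule product_formula[OF _ _ T T'], erule (1) tdown_tops, rule le_tdown)



lemma inj_img2:
  assumes "inj_on \<sigma> X" "M1 \<subseteq> Pow X" "M2 \<subseteq> Pow X" "image \<sigma> ` M1 = image \<sigma> ` M2"
  shows "M1 = M2"
proof -
  have "inj_on (image \<sigma>) (Pow X)" using assms(1) by (rule inj_on_image_Pow)
  then show ?thesis using assms(2-4) by (simp add: inj_on_image_eq_iff)
qed

lemma pullback: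
  assumes M: "istop X M" and inj: "inj_on \<sigma> X" and A: "istop (\<sigma> ` X) A" and sub: "A \<subseteq> image \<sigma> ` M"
  shows "istop X {W\<in>M. \<sigma> ` W \<in> A}" "{W\<in>M. \<sigma> ` W \<in> A} \<subseteq> M" "image \<sigma> ` {W\<in>M. \<sigma> ` W \<in> A} = A"
proof -
  let ?A = "{W\<in>M. \<sigma> ` W \<in> A}"
  show "?A \<subseteq> M" by blast
  show "image \<sigma> ` ?A = A"
  proof
    show "image \<sigma> ` ?A \<subseteq> A" by blast
    show "A \<subseteq> image \<sigma> ` ?A"
    proof
      fix a assume a: "a \<in> A"
      then obtain W where "W \<in> M" "a = \<sigma> ` W" using sub by blast
      then show "a \<in> image \<sigma> ` ?A" using a by blast
    qed
  qed
  show "istop X ?A"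
    unfolding istop_def
  proof (intro conjI ballI)
    show "?A \<subseteq> Pow X" using M unfolding istop_def by blast
    show "{} \<in> ?A" using M A unfolding istop_def by simp
    show "X \<in> ?A" using M A unfolding istop_def by simp
  next
    fix B C assume B: "B \<in> ?A" and C: "C \<in> ?A"
    have BC: "B \<subseteq> X" "C \<subseteq> X" using B C M unfolding istop_def by blast+
    have "B \<union> C \<in> M" "B \<inter> C \<in> M" using B C M unfolding istop_def by blast+
    moreover have "\<sigma> ` (B \<union> C) = \<sigma> ` B \<union> \<sigma> ` C" by blast
    moreover have "\<sigma> ` (B \<inter> C) = \<sigma> ` B \<inter> \<sigma> ` C" by (rule inj_on_image_Int[OF inj BC])
    moreover have "\<sigma> ` B \<union> \<sigma> ` C \<in> A" "\<sigma> ` B \<inter> \<sigma> ` C \<in> A" using B C A unfolding istop_def by blast+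
    ultimately show "B \<union> C \<in> ?A" "B \<inter> C \<in> ?A" by simp_all
  qed
qed

lemma above:
  assumes S: "S \<in> tops n" and c: "tless_set S ({1..n} - U) U" and V: "V \<in> S" and ne: "V \<inter> ({1..n} - U) \<noteq> {}"
  shows "U \<subseteq> V"
proof
  fix j assume j: "j \<in> U"
  obtain i where i: "i \<in> V" "i \<in> {1..n} - U" using ne by blast
  then have "tless S i j" using c j unfolding tless_set_def by blast
  then show "j \<in> V" using V i unfolding tless_def tleq_def by blast
qed

lemma recon:
  assumes S: "S \<in> tops n" and U: "U \<in> S" and c: "tless_set S ({1..n} - U) U"
  shows "S = (\<lambda>a. a \<union> U) ` restr S ({1..n} - U) \<union> restr S U"
proof
  let ?Uc = "{1..n} - U"
  show "S \<subseteq> (\<lambda>a. a \<union> U) ` restr S ?Uc \<union> restr S U"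
  proof
    fix V assume V: "V \<in> S"
    have Vs: "V \<subseteq> {1..n}" using tops_sub[OF S V] .
    show "V \<in> (\<lambda>a. a \<union> U) ` restr S ?Uc \<union> restr S U"
    proof (cases "V \<inter> ?Uc = {}")
      case True
      then have "V = V \<inter> U" using Vs by blast
      then show ?thesis using restr_mem[OF V, of U] by auto
    next
      case False
      then have "U \<subseteq> V" by (rule above[OF S c V])
      then have "V = (V \<inter> ?Uc) \<union> U" using Vs by blast
      then show ?thesis using restr_mem[OF V, of ?Uc] by blast
    qed
  qed
  show "(\<lambda>a. a \<union> U) ` restr S ?Uc \<union> restr S U \<subseteq> S"
  proof
    fix V assume "V \<in> (\<lambda>a. a \<union> U) ` restr S ?Uc \<union> restr S U"
    then consider W where "W \<in> S" "V = (W \<inter> ?Uc) \<union> U" | W where "W \<in> S" "V = W \<inter> U"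
      unfolding restr_def by blast
    then show "V \<in> S"
    proof cases
      case 1
      show ?thesis
      proof (cases "W \<inter> ?Uc = {}")
        case True then show ?thesis using 1 U by simp
      next
        case False
        then have "U \<subseteq> W" by (rule above[OF S c 1(1)])
        then have "V = W" using 1 tops_sub[OF S 1(1)] by blast
        then show ?thesis using 1 by simp
      qed
    next
      case 2 then show ?thesis using tops_closed[OF S 2(1) U] by simp
    qed
  qed
qed



lemma glue:
  assumes T: "T \<in> tops n" and U: "U \<in> T" and A: "istop ({1..n} - U) A" and B: "istop U B"
    and As: "A \<subseteq> restr T ({1..n} - U)" and Bs: "B \<subseteq> restr T U"
    and Smem: "\<And>V. V \<in> S \<longleftrightarrow> (\<exists>a\<in>A. V = a \<union> U) \<or> V \<in> B"
  shows "S \<in> tops n" and "S \<subseteq> T" and "U \<in> S" and "tless_set S ({1..n} - U) U"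
    and "restr S ({1..n} - U) = A" and "restr S U = B"
proof -
  let ?Uc = "{1..n} - U"
  have Us: "U \<subseteq> {1..n}" using tops_sub[OF T U] .
  have Asub: "a \<subseteq> ?Uc" if "a \<in> A" for a using A that unfolding istop_def by blast
  have Bsub: "b \<subseteq> U" if "b \<in> B" for b using B that unfolding istop_def by blast
  have Acl: "a1 \<union> a2 \<in> A" "a1 \<inter> a2 \<in> A" if "a1 \<in> A" "a2 \<in> A" for a1 a2 using A that unfolding istop_def by blast+
  have Bcl: "b1 \<union> b2 \<in> B" "b1 \<inter> b2 \<in> B" if "b1 \<in> B" "b2 \<in> B" for b1 b2 using B that unfolding istop_def by blast+
  have A0: "{} \<in> A" "?Uc \<in> A" using A unfolding istop_def by blast+
  have B0: "{} \<in> B" "U \<in> B" using B unfolding istop_def by blast+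
  show "S \<subseteq> T"
  proof
    fix V assume "V \<in> S"
    then consider a where "a \<in> A" "V = a \<union> U" | "V \<in> B" using Smem by blast
    then show "V \<in> T"
    proof cases
      case 1
      then obtain W where W: "W \<in> T" "a = W \<inter> ?Uc" using As restr_cases by blast
      have "V = W \<union> U" using 1 W tops_sub[OF T W(1)] by blast
      then show ?thesis using tops_closed[OF T W(1) U] by simp
    next
      case 2
      then obtain W where W: "W \<in> T" "V = W \<inter> U" using Bs restr_cases by blast
      then show ?thesis using tops_closed[OF T W(1) U] by simp
    qed
  qed
  show "U \<in> S" using A0 Smem by (metis Un_empty_left)
  show "S \<in> tops n"
    unfolding tops_def mem_Collect_eq
  proof (intro conjI ballI)
    show "S \<subseteq> Pow {1..n}" using Asub Bsub Us using Smem by blast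
    show "{} \<in> S" using B0 using Smem by blast
    have "{1..n} = ?Uc \<union> U" using Us by blast
    then show "{1..n} \<in> S" using A0 using Smem by blast
  next
    fix V1 V2 assume V1: "V1 \<in> S" and V2: "V2 \<in> S"
    consider a1 where "a1 \<in> A" "V1 = a1 \<union> U" | "V1 \<in> B" using V1 using Smem by blast
    then have "V1 \<union> V2 \<in> S \<and> V1 \<inter> V2 \<in> S"
    proof cases
      case c1: 1
      consider a2 where "a2 \<in> A" "V2 = a2 \<union> U" | "V2 \<in> B" using V2 using Smem by blast
      then show ?thesis
      proof cases
        case 1
        have "V1 \<union> V2 = (a1 \<union> a2) \<union> U" "V1 \<inter> V2 = (a1 \<inter> a2) \<union> U" using c1 1 by blast+
        then show ?thesis using Acl[OF c1(1) 1(1)] using Smem by blast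
      next
        case 2
        have "V1 \<union> V2 = V1" "V1 \<inter> V2 = V2" using c1 2 Bsub by blast+
        then show ?thesis using V1 V2 by simp
      qed
    next
      case c2: 2
      consider a2 where "a2 \<in> A" "V2 = a2 \<union> U" | "V2 \<in> B" using V2 using Smem by blast
      then show ?thesis
      proof cases
        case 1
        have "V1 \<union> V2 = V2" "V1 \<inter> V2 = V1" using c2 1 Bsub by blast+
        then show ?thesis using V1 V2 by simp
      next
        case 2
        then show ?thesis using Bcl[OF c2 2] using Smem by blast
      qed
    qed
    then show "V1 \<union> V2 \<in> S" "V1 \<inter> V2 \<in> S" by blast+
  qed
  show "tless_set S ?Uc U"
    unfolding tless_set_def tless_def tleq_def
  proof (rule ballI, rule ballI, rule conjI)
    fix i j assume i: "i \<in> ?Uc" and j: "j \<in> U"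
    show "\<forall>V\<in>S. i \<in> V \<longrightarrow> j \<in> V"
    proof (intro ballI impI)
      fix V assume "V \<in> S" "i \<in> V"
      then consider a where "a \<in> A" "V = a \<union> U" | "V \<in> B" using Smem by blast
      then show "j \<in> V"
      proof cases
        case 1 then show ?thesis using j by blast
      next
        case 2
        have "V \<subseteq> U" using Bsub[OF 2] .
        then have False using \<open>i \<in> V\<close> i by blast
        then show ?thesis ..
      qed
    qed
    show "\<not> (\<forall>V\<in>S. j \<in> V \<longrightarrow> i \<in> V)"
    proof
      assume h: "\<forall>V\<in>S. j \<in> V \<longrightarrow> i \<in> V"
      have "i \<in> U" using h[rule_format, OF \<open>U \<in> S\<close> j] .
      then show False using i by blast
    qed
  qed
  show "restr S ?Uc = A"
  proof
    show "restr S ?Uc \<subseteq> A"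
    proof
      fix x assume "x \<in> restr S ?Uc"
      then obtain V where V: "V \<in> S" "x = V \<inter> ?Uc" using restr_cases by blast
      then consider a where "a \<in> A" "V = a \<union> U" | "V \<in> B" using Smem by blast
      then show "x \<in> A"
      proof cases
        case 1
        then have "x = a" using V(2) Asub by blast
        then show ?thesis using 1 by simp
      next
        case 2
        then have "x = {}" using V(2) Bsub by blast
        then show ?thesis using A0 by simp
      qed
    qed
    show "A \<subseteq> restr S ?Uc"
    proof
      fix a assume a: "a \<in> A"
      then have "a \<union> U \<in> S" using Smem by blast
      moreover have "a = (a \<union> U) \<inter> ?Uc" using Asub[OF a] by blast
      ultimately show "a \<in> restr S ?Uc" using restr_mem by metis
    qed
  qed
  show "restr S U = B"
  proof
    show "restr S U \<subseteq> B"
    proof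
      fix x assume "x \<in> restr S U"
      then obtain V where V: "V \<in> S" "x = V \<inter> U" using restr_cases by blast
      then consider a where "a \<in> A" "V = a \<union> U" | "V \<in> B" using Smem by blast
      then show "x \<in> B"
      proof cases
        case 1
        then have "x = U" using V(2) by blast
        then show ?thesis using B0 by simp
      next
        case 2
        then have "x = V" using V(2) Bsub by blast
        then show ?thesis using 2 by simp
      qed
    qed
    show "B \<subseteq> restr S U"
    proof
      fix b assume b: "b \<in> B"
      then have "b \<in> S" using Smem by blast
      moreover have "b = b \<inter> U" using Bsub[OF b] using Smem by blast
      ultimately show "b \<in> restr S U" using restr_mem by metis
    qed
  qed
qed



lemma Std_restr_eq:
  assumes S: "S \<in> tops n" and Y: "Y \<subseteq> {1..n}"
  shows "Std (restr S Y) = image (sm Y) ` restr S Y"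
proof -
  have "\<Union>(restr S Y) = Y" using restr_Union[OF iffD1[OF tops_istop S] Y] .
  then show ?thesis by (simp add: Std_eq)
qed

lemma restr_mono: "S \<subseteq> T \<Longrightarrow> restr S Y \<subseteq> restr T Y"
  unfolding restr_def by blast

lemma restr_Pow: "S \<in> tops n \<Longrightarrow> Y \<subseteq> {1..n} \<Longrightarrow> restr S Y \<subseteq> Pow Y"
  unfolding restr_def by blast

lemma coprod_bij:
  assumes T: "T \<in> tops n" and U: "U \<in> T"
  shows "bij_betw (\<lambda>S. (Std (restr S ({1..n} - U)), Std (restr S U)))
     {S\<in>tops n. S \<subseteq> T \<and> U \<in> S \<and> tless_set S ({1..n} - U) U}
     ({A\<in>tops (card ({1..n} - U)). A \<subseteq> Std (restr T ({1..n} - U))} \<times> {B\<in>tops (card U). B \<subseteq> Std (restr T U)})"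
proof -
  let ?Uc = "{1..n} - U"
  let ?P = "{S\<in>tops n. S \<subseteq> T \<and> U \<in> S \<and> tless_set S ?Uc U}"
  let ?Phi = "\<lambda>S. (Std (restr S ?Uc), Std (restr S U))"
  have Us: "U \<subseteq> {1..n}" using tops_sub[OF T U] .
  have Ucs: "?Uc \<subseteq> {1..n}" by blast
  have fU: "finite U" "finite ?Uc" using Us finite_subset by auto
  have tT: "istop {1..n} T" using T tops_istop by blast
  show ?thesis
    unfolding bij_betw_def
  proof (intro conjI)
    show "inj_on ?Phi ?P"
    proof (rule inj_onI)
      fix S1 S2 assume S1: "S1 \<in> ?P" and S2: "S2 \<in> ?P" and eq: "?Phi S1 = ?Phi S2"
      have t1: "S1 \<in> tops n" and t2: "S2 \<in> tops n" using S1 S2 by auto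
      have "image (sm ?Uc) ` restr S1 ?Uc = image (sm ?Uc) ` restr S2 ?Uc"
        using eq Std_restr_eq[OF t1 Ucs] Std_restr_eq[OF t2 Ucs] by simp
      then have e1: "restr S1 ?Uc = restr S2 ?Uc"
        by (rule inj_img2[OF sm_inj[OF fU(2)] restr_Pow[OF t1 Ucs] restr_Pow[OF t2 Ucs]])
      have "image (sm U) ` restr S1 U = image (sm U) ` restr S2 U"
        using eq Std_restr_eq[OF t1 Us] Std_restr_eq[OF t2 Us] by simp
      then have e2: "restr S1 U = restr S2 U"
        by (rule inj_img2[OF sm_inj[OF fU(1)] restr_Pow[OF t1 Us] restr_Pow[OF t2 Us]])
      have "S1 = (\<lambda>a. a \<union> U) ` restr S1 ?Uc \<union> restr S1 U" using S1 recon by blast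
      also have "\<dots> = (\<lambda>a. a \<union> U) ` restr S2 ?Uc \<union> restr S2 U" using e1 e2 by simp
      also have "\<dots> = S2" using S2 recon by blast
      finally show "S1 = S2" .
    qed
    show "?Phi ` ?P = {A\<in>tops (card ?Uc). A \<subseteq> Std (restr T ?Uc)} \<times> {B\<in>tops (card U). B \<subseteq> Std (restr T U)}"
    proof
      show "?Phi ` ?P \<subseteq> {A\<in>tops (card ?Uc). A \<subseteq> Std (restr T ?Uc)} \<times> {B\<in>tops (card U). B \<subseteq> Std (restr T U)}"
      proof
        fix p assume "p \<in> ?Phi ` ?P"
        then obtain S where S: "S \<in> ?P" "p = ?Phi S" by blast
        have tS: "S \<in> tops n" "S \<subseteq> T" using S by auto
        have a1: "Std (restr S ?Uc) \<in> tops (card ?Uc)"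
          using Std_tops[OF restr_istop[OF iffD1[OF tops_istop tS(1)] Ucs] fU(2)] .
        have a2: "Std (restr S U) \<in> tops (card U)"
          using Std_tops[OF restr_istop[OF iffD1[OF tops_istop tS(1)] Us] fU(1)] .
        have b1: "Std (restr S ?Uc) \<subseteq> Std (restr T ?Uc)"
          unfolding Std_restr_eq[OF tS(1) Ucs] Std_restr_eq[OF T Ucs]
          using restr_mono[OF tS(2)] by (rule image_mono)
        have b2: "Std (restr S U) \<subseteq> Std (restr T U)"
          unfolding Std_restr_eq[OF tS(1) Us] Std_restr_eq[OF T Us]
          using restr_mono[OF tS(2)] by (rule image_mono)
        show "p \<in> {A\<in>tops (card ?Uc). A \<subseteq> Std (restr T ?Uc)} \<times> {B\<in>tops (card U). B \<subseteq> Std (restr T U)}"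
          using S(2) a1 a2 b1 b2 by simp
      qed
      show "{A\<in>tops (card ?Uc). A \<subseteq> Std (restr T ?Uc)} \<times> {B\<in>tops (card U). B \<subseteq> Std (restr T U)} \<subseteq> ?Phi ` ?P"
      proof
        fix p assume p: "p \<in> {A\<in>tops (card ?Uc). A \<subseteq> Std (restr T ?Uc)} \<times> {B\<in>tops (card U). B \<subseteq> Std (restr T U)}"
        obtain A' B' where pAB: "p = (A', B')" by (cases p)
        have A': "istop (sm ?Uc ` ?Uc) A'" "A' \<subseteq> image (sm ?Uc) ` restr T ?Uc"
          using p pAB Std_restr_eq[OF T Ucs] sm_image[OF fU(2)] tops_istop by auto
        have B': "istop (sm U ` U) B'" "B' \<subseteq> image (sm U) ` restr T U"
          using p pAB Std_restr_eq[OF T Us] sm_image[OF fU(1)] tops_istop by auto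
        define A'' where "A'' = {W\<in>restr T ?Uc. sm ?Uc ` W \<in> A'}"
        define B'' where "B'' = {W\<in>restr T U. sm U ` W \<in> B'}"
        note pa = pullback[OF restr_istop[OF tT Ucs] sm_inj[OF fU(2)] A'(1) A'(2), folded A''_def]
        note pb = pullback[OF restr_istop[OF tT Us] sm_inj[OF fU(1)] B'(1) B'(2), folded B''_def]
        define S where "S = (\<lambda>a. a \<union> U) ` A'' \<union> B''"
        have Smem: "\<And>V. V \<in> S \<longleftrightarrow> (\<exists>a\<in>A''. V = a \<union> U) \<or> V \<in> B''" unfolding S_def by blast
        note g = glue[OF T U pa(1) pb(1) pa(2) pb(2) Smem]
        have SP: "S \<in> ?P" using g by simp
        have "Std (restr S ?Uc) = A'"
          using Std_restr_eq[OF g(1) Ucs] g(5) pa(3) by simp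
        moreover have "Std (restr S U) = B'"
          using Std_restr_eq[OF g(1) Us] g(6) pb(3) by simp
        ultimately have "p = ?Phi S" using pAB by simp
        then show "p \<in> ?Phi ` ?P" using SP by blast
      qed
    qed
  qed
qed



definition cc :: "nat set set \<Rightarrow> nat set set \<Rightarrow> nat set set \<Rightarrow> 'k::field" where
  "cc T0 A B = (\<Sum>U\<in>T0. if Std (restr T0 (\<Union>T0 - U)) = A \<and> Std (restr T0 U) = B then 1 else 0)"

lemma coprod_eq:
  assumes "finite X" "supp x \<subseteq> X"
  shows "coprod x (A, B) = (\<Sum>T0\<in>X. (x T0 :: 'k::field) * cc T0 A B)"
proof -
  have "coprod x (A, B) = (\<Sum>T0\<in>supp x. x T0 * cc T0 A B)"
    unfolding coprod_def cc_def by simp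
  also have "\<dots> = (\<Sum>T0\<in>X. x T0 * cc T0 A B)"
    by (rule sum.mono_neutral_left) (use assms in \<open>auto simp: supp_def\<close>)
  finally show ?thesis .
qed

lemma tensor_sum: "tensor (sum f A) (sum g B) = (\<Sum>a\<in>A. \<Sum>b\<in>B. tensor (f a) (g b))"
proof
  fix p :: "nat set set \<times> nat set set"
  obtain x y where p: "p = (x, y)" by (cases p)
  show "tensor (sum f A) (sum g B) p = (\<Sum>a\<in>A. \<Sum>b\<in>B. tensor (f a) (g b)) p"
    unfolding p tensor_def by (simp add: sum_apply sum_product)
qed

lemma part3:
  assumes T0: "T0 \<in> tops n"
  shows "coprod (ribbon T0 :: 'k::field vec) =
      (\<Sum>U\<in>{U\<in>T0. tless_set T0 ({1..n} - U) U}.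
          tensor (ribbon (Std (restr T0 ({1..n} - U)))) (ribbon (Std (restr T0 U))))"
proof -
  let ?G = "\<lambda>S. coprod (ribbon S :: 'k vec)"
  let ?g = "\<lambda>S U. tensor (ribbon (Std (restr S ({1..n} - U))) :: 'k vec) (ribbon (Std (restr S U)))"
  let ?H = "\<lambda>S. (\<Sum>U\<in>{U\<in>S. tless_set S ({1..n} - U) U}. ?g S U)"
  show ?thesis
  proof (rule mobius_unique[where D = "tops n" and le = "(\<subseteq>)" and f = card and G = ?G and H = ?H])
    fix x assume "x \<in> tops n"
    show "finite {y\<in>tops n. y \<subseteq> x}" using finite_tops by simp
  next
    fix x assume "x \<in> tops n" then show "x \<subseteq> x" by simp
  next
    fix x y assume "x \<in> tops n" "y \<in> tops n" "y \<subseteq> x" "y \<noteq> x"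
    then show "card y < card x" using tops_finite by (auto intro: psubset_card_mono)
  next
    show "T0 \<in> tops n" by (rule T0)
  next
    fix T assume T: "T \<in> tops n"
    let ?P0 = "{y\<in>tops n. y \<subseteq> T}"
    let ?K = "\<lambda>p. (\<Sum>U\<in>T. if Std (restr T ({1..n} - U)) = fst p \<and> Std (restr T U) = snd p then (1::'k) else 0)"
    have UT: "\<Union>T = {1..n}" by (rule tops_Union[OF T])
    have LG: "(\<Sum>S\<in>?P0. ?G S) = ?K"
    proof
      fix p :: "nat set set \<times> nat set set"
      obtain A B where p: "p = (A, B)" by (cases p)
      have "(\<Sum>S\<in>?P0. ?G S) p = (\<Sum>S\<in>?P0. \<Sum>T1\<in>tops n. (ribbon S :: 'k vec) T1 * cc T1 A B)"
        unfolding sum_apply p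
        by (rule sum.cong[OF refl], rule coprod_eq[OF finite_tops supp_ribbon]) simp
      also have "\<dots> = (\<Sum>T1\<in>tops n. (\<Sum>S\<in>?P0. (ribbon S :: 'k vec) T1) * cc T1 A B)"
        by (subst sum.swap) (simp add: sum_distrib_right)
      also have "\<dots> = (\<Sum>T1\<in>tops n. (bvec T :: 'k vec) T1 * cc T1 A B)"
        by (simp add: ribbon_sum[OF T, symmetric] sum_apply)
      also have "\<dots> = (\<Sum>T1\<in>tops n. if T1 = T then cc T A B else (0::'k))"
        by (rule sum.cong[OF refl]) (simp add: bvec_apply)
      also have "\<dots> = cc T A B"
        by (simp add: finite_tops T)
      also have "\<dots> = ?K p" unfolding cc_def p UT by simp
      finally show "(\<Sum>S\<in>?P0. ?G S) p = ?K p" .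
    qed
    have LH: "(\<Sum>S\<in>?P0. ?H S) = ?K"
    proof -
      have "(\<Sum>S\<in>?P0. ?H S) = (\<Sum>S\<in>?P0. \<Sum>U\<in>{U\<in>T. U \<in> S \<and> tless_set S ({1..n} - U) U}. ?g S U)"
      proof (rule sum.cong[OF refl])
        fix S assume "S \<in> ?P0"
        then have "{U\<in>S. tless_set S ({1..n} - U) U} = {U\<in>T. U \<in> S \<and> tless_set S ({1..n} - U) U}" by blast
        then show "?H S = (\<Sum>U\<in>{U\<in>T. U \<in> S \<and> tless_set S ({1..n} - U) U}. ?g S U)" by simp
      qed
      also have "\<dots> = (\<Sum>U\<in>T. \<Sum>S\<in>{S\<in>?P0. U \<in> S \<and> tless_set S ({1..n} - U) U}. ?g S U)"
        by (rule sum.swap_restrict) (use finite_tops tops_finite[OF T] in auto)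
      also have "\<dots> = (\<Sum>U\<in>T. tensor (bvec (Std (restr T ({1..n} - U))) :: 'k vec) (bvec (Std (restr T U))))"
      proof (rule sum.cong[OF refl])
        fix U assume U: "U \<in> T"
        let ?Uc = "{1..n} - U"
        let ?QA = "{A\<in>tops (card ?Uc). A \<subseteq> Std (restr T ?Uc)}"
        let ?QB = "{B\<in>tops (card U). B \<subseteq> Std (restr T U)}"
        have Us: "U \<subseteq> {1..n}" using tops_sub[OF T U] .
        have fU: "finite U" "finite ?Uc" using Us finite_subset by auto
        have tT: "istop {1..n} T" using T tops_istop by blast
        have st1: "Std (restr T ?Uc) \<in> tops (card ?Uc)" using Std_tops[OF restr_istop[OF tT] fU(2)] by blast
        have st2: "Std (restr T U) \<in> tops (card U)" using Std_tops[OF restr_istop[OF tT Us] fU(1)] .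
        have e: "{S\<in>?P0. U \<in> S \<and> tless_set S ?Uc U} = {S\<in>tops n. S \<subseteq> T \<and> U \<in> S \<and> tless_set S ?Uc U}" by blast
        have "(\<Sum>S\<in>{S\<in>tops n. S \<subseteq> T \<and> U \<in> S \<and> tless_set S ?Uc U}. ?g S U)
            = (\<Sum>q\<in>?QA \<times> ?QB. tensor (ribbon (fst q) :: 'k vec) (ribbon (snd q)))"
          using sum.reindex_bij_betw[OF coprod_bij[OF T U], of "\<lambda>q. tensor (ribbon (fst q) :: 'k vec) (ribbon (snd q))"]
          by simp
        also have "\<dots> = tensor (\<Sum>A\<in>?QA. ribbon A :: 'k vec) (\<Sum>B\<in>?QB. ribbon B)"
          by (simp add: tensor_sum sum.cartesian_product case_prod_beta)
        also have "\<dots> = tensor (bvec (Std (restr T ?Uc)) :: 'k vec) (bvec (Std (restr T U)))"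
          by (simp only: ribbon_sum[OF st1] ribbon_sum[OF st2])
        finally show "(\<Sum>S\<in>{S\<in>?P0. U \<in> S \<and> tless_set S ?Uc U}. ?g S U) = tensor (bvec (Std (restr T ?Uc)) :: 'k vec) (bvec (Std (restr T U)))"
          unfolding e .
      qed
      also have "\<dots> = ?K"
      proof
        fix p :: "nat set set \<times> nat set set"
        obtain A B where p: "p = (A, B)" by (cases p)
        show "(\<Sum>U\<in>T. tensor (bvec (Std (restr T ({1..n} - U))) :: 'k vec) (bvec (Std (restr T U)))) p = ?K p"
          unfolding sum_apply p by (rule sum.cong[OF refl]) (auto simp: tensor_def bvec_apply)
      qed
      finally show ?thesis .
    qed
    show "(\<Sum>S\<in>{y\<in>tops n. y \<subseteq> T}. ?G S) = (\<Sum>S\<in>{y\<in>tops n. y \<subseteq> T}. ?H S)"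
      using LG LH by simp
  qed
qed


theorem theorem12:
  shows
  "(\<forall>k l T T'. T \<in> tops k \<longrightarrow> T' \<in> tops l \<longrightarrow>
      prod_dot (ribbon T) (ribbon T') =
      (\<Sum>T''\<in>{T''\<in>tops (k + l). restr T'' {1..k} = T \<and>
                 Std (restr T'' ({1..k + l} - {1..k})) = T'}. (ribbon T'' :: 'k::field vec)))
   \<and> (\<forall>k l T T'. T \<in> tops k \<longrightarrow> T' \<in> tops l \<longrightarrow>
      prod_down (ribbon T) (ribbon T') =
      (\<Sum>T''\<in>{T''\<in>tops (k + l). restr T'' {1..k} = T \<and>
                 Std (restr T'' ({1..k + l} - {1..k})) = T' \<and>
                 tleq_set T'' {1..k} ({1..k + l} - {1..k})}. (ribbon T'' :: 'k vec)))
   \<and> (\<forall>n T. T \<in> tops n \<longrightarrow>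
      coprod (ribbon T :: 'k vec) =
      (\<Sum>U\<in>{U\<in>T. tless_set T ({1..n} - U) U}.
          tensor (ribbon (Std (restr T ({1..n} - U)))) (ribbon (Std (restr T U)))))"
proof (intro conjI allI impI)
  fix k l :: nat and T T' :: "nat set set"
  assume "T \<in> tops k" "T' \<in> tops l"
  then show "prod_dot (ribbon T) (ribbon T') =
      (\<Sum>T''\<in>{T''\<in>tops (k + l). restr T'' {1..k} = T \<and>
                 Std (restr T'' ({1..k + l} - {1..k})) = T'}. (ribbon T'' :: 'k::field vec))"
    by (rule part1)
next
  fix k l :: nat and T T' :: "nat set set"
  assume "T \<in> tops k" "T' \<in> tops l"
  then show "prod_down (ribbon T) (ribbon T') =
      (\<Sum>T''\<in>{T''\<in>tops (k + l). restr T'' {1..k} = T \<and>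
                 Std (restr T'' ({1..k + l} - {1..k})) = T' \<and>
                 tleq_set T'' {1..k} ({1..k + l} - {1..k})}. (ribbon T'' :: 'k vec))"
    by (rule part2)
next
  fix n :: nat and T :: "nat set set"
  assume "T \<in> tops n"
  then show "coprod (ribbon T :: 'k vec) =
      (\<Sum>U\<in>{U\<in>T. tless_set T ({1..n} - U) U}.
          tensor (ribbon (Std (restr T ({1..n} - U)))) (ribbon (Std (restr T U))))"
    by (rule part3)
qed

end
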